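(* Let $\phi\in L^2(\mathbb{R}^3,\mathbb{C}^2)$ be not the zero function. Then there exists $A\in SU(2)$ such that $\phi$ and $A\bullet\phi$ are linearly independent.
   Context: Let $\sigma=(\sigma_1,\sigma_2,\sigma_3)$ be the Pauli matrices. To each $A\in SU(2)$ is associated the unique rotation $R_A\in SO(3)$ such that $(R_Ax)\cdot\sigma=A(x\cdot\sigma)A^{-1}$ for all $x\in\mathbb{R}^3$. The unitary representation $\bullet$ of $SU(2)$ on $L^2(\mathbb{R}^3,\mathbb{C}^2)$ is $(A\bullet\phi)(x):=A\,\phi(R_A^{-1}x)$. *)

theory Defs
  imports "HOL-Analysis.Analysis"
begin

definition sigma1 :: "complex^2^2" where
  "sigma1 = (\<chi> i j. if i \<noteq> j then 1 else 0)"
definition sigma2 :: "complex^2^2" where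
  "sigma2 = (\<chi> i j. if i = 1 \<and> j = 2 then - \<i> else if i = 2 \<and> j = 1 then \<i> else 0)"
definition sigma3 :: "complex^2^2" where
  "sigma3 = (\<chi> i j. if i = j then (if i = 1 then 1 else -1) else 0)"

definition sigma_dot :: "real^3 \<Rightarrow> complex^2^2" where
  "sigma_dot x = (x$1) *\<^sub>R sigma1 + (x$2) *\<^sub>R sigma2 + (x$3) *\<^sub>R sigma3"

definition adjoint_mat :: "complex^2^2 \<Rightarrow> complex^2^2" where
  "adjoint_mat A = (\<chi> i j. cnj (A$j$i))"

definition SU2 :: "(complex^2^2) set" where
  "SU2 = {A. A ** adjoint_mat A = mat 1 \<and> det A = 1}"

definition SO3 :: "(real^3^3) set" where
  "SO3 = {R. R ** transpose R = mat 1 \<and> det R = 1}"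

definition rotA :: "complex^2^2 \<Rightarrow> real^3^3" where
  "rotA A = (THE R. R \<in> SO3 \<and>
      (\<forall>x. sigma_dot (R *v x) = A ** sigma_dot x ** matrix_inv A))"

definition su2_act :: "complex^2^2 \<Rightarrow> (real^3 \<Rightarrow> complex^2) \<Rightarrow> (real^3 \<Rightarrow> complex^2)" where
  "su2_act A \<phi> = (\<lambda>x. A *v \<phi> (matrix_inv (rotA A) *v x))"

text \<open>Representatives of elements of L^2(R^3, C^2).\<close>
definition L2 :: "(real^3 \<Rightarrow> complex^2) set" where
  "L2 = {\<phi>. \<phi> \<in> borel_measurable lebesgue \<and> integrable lebesgue (\<lambda>x. (norm (\<phi> x))^2)}"

end

theory Submission imports Defs begin

definition PP :: "complex^2^2" where "PP = (\<chi> i j. if i \<noteq> j then \<i> else (0::complex))"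
definition QQ :: "complex^2^2" where "QQ = (\<chi> i j. if i = j then (if i = 1 then \<i> else - \<i>) else (0::complex))"
definition RP :: "real^3^3" where "RP = (\<chi> i j. if i = j then (if i = 1 then 1 else -1) else (0::real))"
definition RQ :: "real^3^3" where "RQ = (\<chi> i j. if i = j then (if i = 3 then 1 else -1) else (0::real))"

lemma PP_sq: "PP ** (- PP) = mat 1" "(- PP) ** PP = mat 1"
  by (auto simp: PP_def matrix_matrix_mult_def vec_eq_iff forall_2 sum_2 mat_def)

lemma QQ_sq: "QQ ** (- QQ) = mat 1" "(- QQ) ** QQ = mat 1"
  by (auto simp: QQ_def matrix_matrix_mult_def vec_eq_iff forall_2 sum_2 mat_def)

lemma PP_SU2: "PP \<in> SU2"
  by (auto simp: SU2_def PP_def adjoint_mat_def det_2 matrix_matrix_mult_def vec_eq_iff forall_2 sum_2 mat_def)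
lemma QQ_SU2: "QQ \<in> SU2"
  by (auto simp: SU2_def QQ_def adjoint_mat_def det_2 matrix_matrix_mult_def vec_eq_iff forall_2 sum_2 mat_def)

lemma RP_SO3: "RP \<in> SO3"
  by (auto simp: SO3_def RP_def det_3 matrix_matrix_mult_def transpose_def vec_eq_iff forall_3 sum_3 mat_def)
lemma RQ_SO3: "RQ \<in> SO3"
  by (auto simp: SO3_def RQ_def det_3 matrix_matrix_mult_def transpose_def vec_eq_iff forall_3 sum_3 mat_def)

lemma RP_sigma: "sigma_dot (RP *v x) = PP ** sigma_dot x ** (- PP)"
  by (auto simp: sigma_dot_def RP_def PP_def sigma1_def sigma2_def sigma3_def matrix_matrix_mult_def
     matrix_vector_mult_def vec_eq_iff forall_2 forall_3 sum_2 sum_3 complex_eq_iff)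
lemma RQ_sigma: "sigma_dot (RQ *v x) = QQ ** sigma_dot x ** (- QQ)"
  by (auto simp: sigma_dot_def RQ_def QQ_def sigma1_def sigma2_def sigma3_def matrix_matrix_mult_def
     matrix_vector_mult_def vec_eq_iff forall_2 forall_3 sum_2 sum_3 complex_eq_iff)

lemma sigma_inj: "sigma_dot x = sigma_dot y \<Longrightarrow> x = y"
proof -
  assume h: "sigma_dot x = sigma_dot y"
  have "sigma_dot x $1$1 = sigma_dot y $1$1" "sigma_dot x $1$2 = sigma_dot y $1$2" "sigma_dot x $2$2 = sigma_dot y $2$2"
    using h by auto
  then show ?thesis
    by (auto simp: sigma_dot_def sigma1_def sigma2_def sigma3_def vec_eq_iff forall_3 complex_eq_iff)
qed


lemma matrix_inv_eq:
  fixes A B :: "'a::semiring_1^'n^'n"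
  assumes "A ** B = mat 1" "B ** A = mat 1"
  shows "matrix_inv A = B"
proof -
  have ex: "\<exists>A'. A ** A' = mat 1 \<and> A' ** A = mat 1" using assms by blast
  let ?C = "matrix_inv A"
  have C: "A ** ?C = mat 1 \<and> ?C ** A = mat 1"
    unfolding matrix_inv_def by (rule someI_ex[OF ex])
  have "?C = ?C ** (A ** B)" using assms by (simp add: matrix_mul_rid)
  also have "\<dots> = (?C ** A) ** B" by (simp add: matrix_mul_assoc)
  also have "\<dots> = B" using C by (simp add: matrix_mul_lid)
  finally show ?thesis .
qed

lemma RP_sq: "RP ** RP = mat 1"
  by (auto simp: RP_def matrix_matrix_mult_def vec_eq_iff forall_3 sum_3 mat_def)
lemma RQ_sq: "RQ ** RQ = mat 1"
  by (auto simp: RQ_def matrix_matrix_mult_def vec_eq_iff forall_3 sum_3 mat_def)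

lemma rotA_eq:
  assumes "R \<in> SO3" "\<And>x. sigma_dot (R *v x) = A ** sigma_dot x ** matrix_inv A"
  shows "rotA A = R"
  unfolding rotA_def
proof (rule the_equality)
  show "R \<in> SO3 \<and> (\<forall>x. sigma_dot (R *v x) = A ** sigma_dot x ** matrix_inv A)" using assms by blast
next
  fix R' assume "R' \<in> SO3 \<and> (\<forall>x. sigma_dot (R' *v x) = A ** sigma_dot x ** matrix_inv A)"
  then have "\<forall>x. R' *v x = R *v x" using assms(2) sigma_inj by metis
  then show "R' = R" using matrix_eq by blast
qed

lemma rotA_PP: "rotA PP = RP"
  by (rule rotA_eq[OF RP_SO3]) (simp add: RP_sigma matrix_inv_eq[OF PP_sq])
lemma rotA_QQ: "rotA QQ = RQ"
  by (rule rotA_eq[OF RQ_SO3]) (simp add: RQ_sigma matrix_inv_eq[OF QQ_sq])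

lemma act_PP: "su2_act PP \<phi> = (\<lambda>x. PP *v \<phi> (RP *v x))"
  by (simp add: su2_act_def rotA_PP matrix_inv_eq[OF RP_sq RP_sq])
lemma act_QQ: "su2_act QQ \<phi> = (\<lambda>x. QQ *v \<phi> (RQ *v x))"
  by (simp add: su2_act_def rotA_QQ matrix_inv_eq[OF RQ_sq RQ_sq])

lemma AE_pullback:
  fixes M :: "real^3^3"
  assumes MM: "M ** M = mat 1" and ae: "AE x in lebesgue. P x"
  shows "AE x in lebesgue. P (M *v x)"
proof -
  obtain N where N: "N \<in> null_sets lebesgue" "{x. \<not> P x} \<subseteq> N"
    using ae by (auto simp: eventually_ae_filter)
  have neg: "negligible N" using N by (simp add: negligible_iff_null_sets)
  have "negligible ((\<lambda>x. M *v x) ` N)"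
    by (rule negligible_differentiable_image_negligible[OF _ neg])
       (auto intro!: linear_imp_differentiable_on matrix_vector_mul_linear)
  moreover have "{x. \<not> P (M *v x)} \<subseteq> (\<lambda>x. M *v x) ` N"
  proof
    fix x assume "x \<in> {x. \<not> P (M *v x)}"
    then have "M *v x \<in> N" using N by auto
    moreover have "x = M *v (M *v x)" using MM by (simp add: matrix_vector_mul_assoc)
    ultimately show "x \<in> (\<lambda>x. M *v x) ` N" by blast
  qed
  ultimately show ?thesis
    by (auto simp: eventually_ae_filter negligible_iff_null_sets)
qed

lemma PQ_anti: "QQ *v (PP *v y) = PP *v (QQ *v y) \<Longrightarrow> y = 0"
  by (auto simp: PP_def QQ_def matrix_vector_mult_def vec_eq_iff forall_2 sum_2)


lemma mv_smult: "(M::complex^2^2) *v (c *s v) = c *s (M *v v)"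
  by (simp add: matrix_vector_mult_def vec_eq_iff sum_2 algebra_simps)

lemma dep_reduce:
  fixes \<phi> \<psi> :: "real^3 \<Rightarrow> complex^2"
  assumes "(a, b) \<noteq> (0, 0)" "AE x in lebesgue. a *s \<phi> x + b *s \<psi> x = 0"
    and "\<not> (AE x in lebesgue. \<phi> x = 0)"
  shows "\<exists>c. AE x in lebesgue. \<psi> x = c *s \<phi> x"
proof (cases "b = 0")
  case True
  then have "a \<noteq> 0" using assms(1) by auto
  have "AE x in lebesgue. \<phi> x = 0"
    using assms(2)
  proof eventually_elim
    case (elim x)
    then have "a *s \<phi> x = 0" using True by simp
    then show ?case using \<open>a \<noteq> 0\<close> by simp
  qed
  then show ?thesis using assms(3) by blast
next
  case False
  have "AE x in lebesgue. \<psi> x = (- a / b) *s \<phi> x"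
    using assms(2) proof eventually_elim
    case (elim x)
    have "b *s \<psi> x = - (a *s \<phi> x)" using elim by (simp add: add_eq_0_iff)
    then have "(1/b) *s (b *s \<psi> x) = (1/b) *s (- (a *s \<phi> x))" by simp
    then show ?case using False by (simp add: vector_smult_assoc)
  qed
  then show ?thesis by blast
qed

theorem lemma1:
  fixes \<phi> :: "real^3 \<Rightarrow> complex^2"
  assumes "\<phi> \<in> L2"
    and "\<not> (AE x in lebesgue. \<phi> x = 0)"
  shows "\<exists>A\<in>SU2. \<not> (\<exists>a b :: complex. (a, b) \<noteq> (0, 0) \<and>
            (AE x in lebesgue. a *s \<phi> x + b *s su2_act A \<phi> x = 0))"
proof (rule ccontr)
  assume "\<not> ?thesis"
  then have dep: "\<And>A. A \<in> SU2 \<Longrightarrow> \<exists>c. AE x in lebesgue. su2_act A \<phi> x = c *s \<phi> x"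
    using dep_reduce[OF _ _ assms(2)] by blast
  obtain p where p: "AE x in lebesgue. PP *v \<phi> (RP *v x) = p *s \<phi> x"
    using dep[OF PP_SU2] by (auto simp: act_PP)
  obtain q where q: "AE x in lebesgue. QQ *v \<phi> (RQ *v x) = q *s \<phi> x"
    using dep[OF QQ_SU2] by (auto simp: act_QQ)
  define S where "S = RP ** RQ"
  have S1: "RP *v (RQ *v x) = S *v x" for x by (simp add: S_def matrix_vector_mul_assoc)
  have S2: "RQ *v (RP *v x) = S *v x" for x
    by (simp add: S_def RP_def RQ_def matrix_matrix_mult_def matrix_vector_mult_def vec_eq_iff forall_3 sum_3)
  have SS: "S ** S = mat 1"
    by (simp add: S_def RP_def RQ_def matrix_matrix_mult_def mat_def vec_eq_iff forall_3 sum_3)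
  have p': "AE x in lebesgue. PP *v \<phi> (S *v x) = p *s \<phi> (RQ *v x)"
    using AE_pullback[OF RQ_sq p] by (simp add: S1)
  have q': "AE x in lebesgue. QQ *v \<phi> (S *v x) = q *s \<phi> (RP *v x)"
    using AE_pullback[OF RP_sq q] by (simp add: S2)
  have "AE x in lebesgue. \<phi> (S *v x) = 0"
    using p q p' q'
  proof eventually_elim
    case (elim x)
    have "QQ *v (PP *v \<phi> (S *v x)) = p *s (q *s \<phi> x)"
      using elim by (simp add: mv_smult)
    moreover have "PP *v (QQ *v \<phi> (S *v x)) = q *s (p *s \<phi> x)"
      using elim by (simp add: mv_smult)
    moreover have "p *s (q *s \<phi> x) = q *s (p *s \<phi> x)"
      by (simp add: vector_smult_assoc mult.commute)
    ultimately show ?case using PQ_anti by metis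
  qed
  from AE_pullback[OF SS this] have "AE x in lebesgue. \<phi> x = 0"
    using SS by (simp add: matrix_vector_mul_assoc)
  then show False using assms(2) by blast
qed

end
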